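(* Let $(\bm{W}_0,\bm{D}_0,f_{0,j}:j=1,\ldots,p)$ and $(\bm{W}_1,\bm{D}_1,f_{1,j}:j=1,\ldots,p)$ be two parameter values of the model in the context that lead to the same distribution of $(\bm{Y}_t:t=1,\ldots,T)$ for every $T=1,2,\ldots$, where all diagonal entries of $\bm{W}_1$ are zero and $\bm{W}_0$ is strictly lower triangular. If, for each $k=0,1$, the set of functions $\{f_{k,j}:j=1,\ldots,p\}$ is linearly independent, then $\bm{W}_0=\bm{W}_1$, $\bm{D}_0=\bm{D}_1$, and $f_{0,j}=f_{1,j}$ for all $j=1,\ldots,p$.
   Context: Model: a $p$-dimensional time series $(\bm{Y}_t)$ satisfies $\bm{Y}_t-\bm{W}\bm{Y}_t=\bm{D}^{1/2}\bm{Z}_t$, where $\bm{W}$ is a $p\times p$ matrix with $\bm{I}-\bm{W}$ invertible, $\bm{D}$ is a diagonal matrix with positive diagonal entries, and $(\bm{Z}_t)$ is a zero-mean stationary Gaussian process whose $p$ components are mutually independent univariate stationary series with unit variance and continuous spectral densities $f_1,\ldots,f_p$ on $[-\pi,\pi]$, where $f_j(\omega)=\gamma_j(0)+2\sum_{h\ge1}\gamma_j(h)\cos(h\omega)$ with $\gamma_j$ the autocovariance function of the $j$th component. *)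

theory Defs
  imports "HOL-Analysis.Analysis"
begin

text \<open>Component-wise autocovariances are given as g :: 'p => nat => real,
  with g j h = gamma_j(h) for lags h >= 0 (gamma_j(-h) = gamma_j(h)).\<close>

definition diag_mat :: "(real ^ 'p) \<Rightarrow> real ^ 'p ^ 'p" where
  "diag_mat v = (\<chi> i j. if i = j then v $ i else 0)"

definition is_diag :: "real ^ 'p ^ 'p \<Rightarrow> bool" where
  "is_diag D \<longleftrightarrow> (\<forall>i j. i \<noteq> j \<longrightarrow> D $ i $ j = 0)"

definition diag_sqrt :: "real ^ 'p ^ 'p \<Rightarrow> real ^ 'p ^ 'p" where
  "diag_sqrt D = diag_mat (\<chi> i. sqrt (D $ i $ i))"

definition spec_dens :: "(nat \<Rightarrow> real) \<Rightarrow> real \<Rightarrow> real" where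
  "spec_dens \<gamma> \<omega> = \<gamma> 0 + 2 * (\<Sum>h. \<gamma> (Suc h) * cos (real (Suc h) * \<omega>))"

definition unit_autocov :: "(nat \<Rightarrow> real) \<Rightarrow> bool" where
  "unit_autocov \<gamma> \<longleftrightarrow> \<gamma> 0 = 1 \<and>
     (\<forall>n (c :: nat \<Rightarrow> real). (\<Sum>s<n. \<Sum>t<n. c s * c t * \<gamma> (nat \<bar>int s - int t\<bar>)) \<ge> 0)"

text \<open>Admissible parameter (W, D, f_1..f_p) of the model, with f_j the
  spectral density of the j-th component of Z (autocovariance g j).\<close>
definition admissible :: "real ^ 'p ^ 'p \<Rightarrow> real ^ 'p ^ 'p \<Rightarrow> ('p \<Rightarrow> nat \<Rightarrow> real) \<Rightarrow> bool" where
  "admissible W D g \<longleftrightarrow>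
     invertible (mat 1 - W) \<and> is_diag D \<and> (\<forall>i. D $ i $ i > 0) \<and>
     (\<forall>j. unit_autocov (g j) \<and>
          (\<forall>\<omega>\<in>{-pi..pi}. summable (\<lambda>h. g j (Suc h) * cos (real (Suc h) * \<omega>))) \<and>
          continuous_on {-pi..pi} (spec_dens (g j)))"

text \<open>Lag-h autocovariance matrix Cov(Y_{t+h}, Y_t), h >= 0, of
  Y_t = (I - W)^{-1} D^{1/2} Z_t, with Cov(Z_{t+h}, Z_t) = diag(gamma_j(h)).
  Since (Y_t) is a zero-mean Gaussian process, the law of (Y_1,...,Y_T) for every T
  is determined by (and determines) these matrices.\<close>
definition Y_autocov :: "real ^ 'p ^ 'p \<Rightarrow> real ^ 'p ^ 'p \<Rightarrow> ('p \<Rightarrow> nat \<Rightarrow> real) \<Rightarrow> nat \<Rightarrow> real ^ 'p ^ 'p" where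
  "Y_autocov W D g h =
     (let A = matrix_inv (mat 1 - W) ** diag_sqrt D
      in A ** diag_mat (\<chi> j. g j h) ** transpose A)"

definition same_fdd :: "real ^ 'p ^ 'p \<Rightarrow> real ^ 'p ^ 'p \<Rightarrow> ('p \<Rightarrow> nat \<Rightarrow> real) \<Rightarrow>
    real ^ 'p ^ 'p \<Rightarrow> real ^ 'p ^ 'p \<Rightarrow> ('p \<Rightarrow> nat \<Rightarrow> real) \<Rightarrow> bool" where
  "same_fdd W0 D0 g0 W1 D1 g1 \<longleftrightarrow>
     (\<forall>T::nat. T \<ge> 1 \<longrightarrow> (\<forall>s t. 1 \<le> s \<and> s \<le> t \<and> t \<le> T \<longrightarrow>
        Y_autocov W0 D0 g0 (t - s) = Y_autocov W1 D1 g1 (t - s)))"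

definition lin_indep_funs :: "('p::finite \<Rightarrow> real \<Rightarrow> real) \<Rightarrow> bool" where
  "lin_indep_funs f \<longleftrightarrow>
     (\<forall>c :: 'p \<Rightarrow> real. (\<forall>\<omega>\<in>{-pi..pi}. (\<Sum>j\<in>UNIV. c j * f j \<omega>) = 0) \<longrightarrow> (\<forall>j. c j = 0))"

end

theory Submission
  imports Defs
begin

lemma minv: "invertible A \<Longrightarrow> A ** matrix_inv A = mat 1 \<and> matrix_inv A ** A = mat 1"
  unfolding invertible_def matrix_inv_def by (rule someI_ex)

lemma mm_entry: "(A ** B) $ i $ j = (\<Sum>k\<in>UNIV. A$i$k * B$k$j)"
  by (simp add: matrix_matrix_mult_def)

lemma sum_single: "(\<And>k. k \<noteq> i \<Longrightarrow> f k = 0) \<Longrightarrow> sum f (UNIV::'a::finite set) = (f i :: real)"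
  by (metis (mono_tags, lifting) UNIV_I finite sum.remove sum.neutral DiffD2 singletonI add.right_neutral)

lemma diag_left: "(diag_mat u ** (A::real^'n^'n))$i$j = u$i * A$i$j"
  apply (simp add: mm_entry)
  apply (subst sum_single[of i])
   apply (auto simp: diag_mat_def)
  done

lemma diag_right: "((A::real^'n^'n) ** diag_mat u)$i$j = A$i$j * u$j"
  apply (simp add: mm_entry)
  apply (subst sum_single[of j])
   apply (auto simp: diag_mat_def)
  done

lemma diag_mul: "diag_mat u ** diag_mat v = diag_mat (\<chi> i. u$i * v$i)"
  by (simp add: vec_eq_iff diag_left) (simp add: diag_mat_def)

lemma quad_entry: "((M::real^'n^'n) ** diag_mat v ** transpose M)$i$k = (\<Sum>j\<in>UNIV. M$i$j * v$j * M$k$j)"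
proof -
  have "((M::real^'n^'n) ** diag_mat v ** transpose M)$i$k = (\<Sum>j\<in>UNIV. (M ** diag_mat v)$i$j * (transpose M)$j$k)"
    by (rule mm_entry)
  then show ?thesis by (simp add: diag_right transpose_def)
qed

lemma inv_pair:
  assumes "admissible W D g"
  shows "(diag_mat (\<chi> i. 1 / sqrt (D$i$i)) ** (mat 1 - W)) ** (matrix_inv (mat 1 - W) ** diag_sqrt D) = mat 1"
  and "(matrix_inv (mat 1 - W) ** diag_sqrt D) ** (diag_mat (\<chi> i. 1 / sqrt (D$i$i)) ** (mat 1 - W)) = (mat 1 :: real^'n^'n)"
proof -
  have inv: "invertible (mat 1 - W)" and pos: "\<forall>i. D$i$i > 0" using assms by (auto simp: admissible_def)
  have pos': "\<forall>i. D$i$i \<noteq> 0" using pos by (metis order_less_irrefl)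
  have d1: "diag_mat (\<chi> i. 1 / sqrt (D$i$i)) ** diag_sqrt D = mat 1"
    using pos' by (simp add: diag_sqrt_def diag_mul) (simp add: diag_mat_def mat_def vec_eq_iff)
  have d2: "diag_sqrt D ** diag_mat (\<chi> i. 1 / sqrt (D$i$i)) = mat 1"
    using pos' by (simp add: diag_sqrt_def diag_mul) (simp add: diag_mat_def mat_def vec_eq_iff)
  have "(diag_mat (\<chi> i. 1 / sqrt (D$i$i)) ** (mat 1 - W)) ** (matrix_inv (mat 1 - W) ** diag_sqrt D)
     = diag_mat (\<chi> i. 1 / sqrt (D$i$i)) ** ((mat 1 - W) ** matrix_inv (mat 1 - W)) ** diag_sqrt D"
    by (simp add: matrix_mul_assoc)
  then show "(diag_mat (\<chi> i. 1 / sqrt (D$i$i)) ** (mat 1 - W)) ** (matrix_inv (mat 1 - W) ** diag_sqrt D) = mat 1"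
    using minv[OF inv] d1 by simp
  have "(matrix_inv (mat 1 - W) ** diag_sqrt D) ** (diag_mat (\<chi> i. 1 / sqrt (D$i$i)) ** (mat 1 - W))
     = matrix_inv (mat 1 - W) ** (diag_sqrt D ** diag_mat (\<chi> i. 1 / sqrt (D$i$i))) ** (mat 1 - W)"
    by (simp add: matrix_mul_assoc)
  then show "(matrix_inv (mat 1 - W) ** diag_sqrt D) ** (diag_mat (\<chi> i. 1 / sqrt (D$i$i)) ** (mat 1 - W)) = (mat 1 :: real^'n^'n)"
    using minv[OF inv] d2 by simp
qed

lemma indep_transfer:
  assumes adm: "admissible W D g" and ind: "lin_indep_funs (\<lambda>j. spec_dens (g j))"
    and z: "\<forall>h. (\<Sum>j\<in>UNIV. c j * g j h) = 0"
  shows "c j = 0"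
proof -
  have "\<forall>\<omega>\<in>{-pi..pi}. (\<Sum>j\<in>UNIV. c j * spec_dens (g j) \<omega>) = 0"
  proof
    fix \<omega> :: real assume w: "\<omega> \<in> {-pi..pi}"
    define F where "F = (\<lambda>j h. g j (Suc h) * cos (real (Suc h) * \<omega>))"
    have sm: "summable (F j)" for j using adm w unfolding admissible_def F_def by blast
    have "(\<Sum>j\<in>UNIV. c j * spec_dens (g j) \<omega>) = (\<Sum>j\<in>UNIV. c j * g j 0) + 2 * (\<Sum>j\<in>UNIV. c j * suminf (F j))"
      unfolding spec_dens_def F_def by (simp add: sum.distrib sum_distrib_left algebra_simps)
    also have "(\<Sum>j\<in>UNIV. c j * suminf (F j)) = (\<Sum>j\<in>UNIV. suminf (\<lambda>h. c j * F j h))"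
      by (simp add: suminf_mult sm)
    also have "\<dots> = suminf (\<lambda>h. \<Sum>j\<in>UNIV. c j * F j h)"
      by (rule suminf_sum[symmetric]) (simp add: sm summable_mult)
    also have "(\<lambda>h. \<Sum>j\<in>UNIV. c j * F j h) = (\<lambda>h. (\<Sum>j\<in>UNIV. c j * g j (Suc h)) * cos (real (Suc h) * \<omega>))"
      by (simp add: F_def sum_distrib_right mult.assoc)
    finally show "(\<Sum>j\<in>UNIV. c j * spec_dens (g j) \<omega>) = 0" using z by simp
  qed
  then show ?thesis using ind unfolding lin_indep_funs_def by blast
qed

lemma perm_id:
  fixes \<sigma> :: "'a::{finite,linorder} \<Rightarrow> 'a"
  assumes inj: "inj \<sigma>" and ge: "\<forall>i. i \<le> \<sigma> i"
  shows "\<sigma> i = i"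
proof (rule ccontr)
  assume "\<sigma> i \<noteq> i"
  then have lt: "i < \<sigma> i" using ge by (metis order_less_le)
  let ?U = "{x. i < x}"
  have "\<sigma> ` insert i ?U \<subseteq> ?U" using lt ge by (auto intro: less_le_trans)
  then have "card (\<sigma> ` insert i ?U) \<le> card ?U" by (simp add: card_mono)
  moreover have "card (\<sigma> ` insert i ?U) = card (insert i ?U)"
    by (rule card_image) (meson inj inj_on_subset subset_UNIV)
  moreover have "card (insert i ?U) = Suc (card ?U)" by simp
  ultimately show False by simp
qed

lemma B_entry: "(diag_mat (\<chi> i. 1 / sqrt (D$i$i)) ** (mat 1 - W))$i$j = 1 / sqrt (D$i$i) * ((if i = j then 1 else 0) - (W::real^'n^'n)$i$j)"
  by (simp add: diag_left mat_def)

theorem lemma3: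
  fixes W0 D0 W1 D1 :: "real ^ ('p::{finite,linorder}) ^ ('p::{finite,linorder})"
    and g0 g1 :: "('p::{finite,linorder}) \<Rightarrow> nat \<Rightarrow> real"
  assumes adm0: "admissible W0 D0 g0"
    and adm1: "admissible W1 D1 g1"
    and same: "same_fdd W0 D0 g0 W1 D1 g1"
    and W1_diag: "\<forall>i. W1 $ i $ i = 0"
    and W0_strict_lower: "\<forall>i j. i \<le> j \<longrightarrow> W0 $ i $ j = 0"
    and indep0: "lin_indep_funs (\<lambda>j. spec_dens (g0 j))"
    and indep1: "lin_indep_funs (\<lambda>j. spec_dens (g1 j))"
  shows "W0 = W1 \<and> D0 = D1 \<and>
         (\<forall>j. \<forall>\<omega>\<in>{-pi..pi}. spec_dens (g0 j) \<omega> = spec_dens (g1 j) \<omega>)"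
proof -
  define A0 where "A0 = matrix_inv (mat 1 - W0) ** diag_sqrt D0"
  define A1 where "A1 = matrix_inv (mat 1 - W1) ** diag_sqrt D1"
  define B0 where "B0 = diag_mat (\<chi> i. 1 / sqrt (D0$i$i)) ** (mat 1 - W0)"
  define B1 where "B1 = diag_mat (\<chi> i. 1 / sqrt (D1$i$i)) ** (mat 1 - W1)"
  define L0 where "L0 h = diag_mat (\<chi> j. g0 j h)" for h
  define L1 where "L1 h = diag_mat (\<chi> j. g1 j h)" for h
  define M where "M = B1 ** A0"
  have BA0: "B0 ** A0 = mat 1" and AB0: "A0 ** B0 = mat 1"
    using inv_pair[OF adm0] by (simp_all add: A0_def B0_def)
  have BA1: "B1 ** A1 = mat 1" and AB1: "A1 ** B1 = mat 1"
    using inv_pair[OF adm1] by (simp_all add: A1_def B1_def)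
  have pos0: "\<forall>i. D0$i$i > 0" and pos1: "\<forall>i. D1$i$i > 0"
    and dg0: "is_diag D0" and dg1: "is_diag D1"
    using adm0 adm1 by (auto simp: admissible_def)
  have E: "A0 ** L0 h ** transpose A0 = A1 ** L1 h ** transpose A1" for h
  proof -
    have "Y_autocov W0 D0 g0 (Suc h - 1) = Y_autocov W1 D1 g1 (Suc h - 1)"
      using same unfolding same_fdd_def by (metis le_add1 order_refl plus_1_eq_Suc Suc_le_mono le0 One_nat_def)
    then show ?thesis by (simp add: Y_autocov_def Let_def A0_def A1_def L0_def L1_def)
  qed
  have EM: "M ** L0 h ** transpose M = L1 h" for h
  proof -
    have tM: "transpose M = transpose A0 ** transpose B1" by (simp add: M_def matrix_transpose_mul)
    have "M ** L0 h ** transpose M = B1 ** (A0 ** L0 h ** transpose A0) ** transpose B1"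
      unfolding tM by (simp add: M_def matrix_mul_assoc)
    also have "\<dots> = B1 ** (A1 ** L1 h ** transpose A1) ** transpose B1" by (simp add: E)
    also have "\<dots> = (B1 ** A1) ** L1 h ** transpose (B1 ** A1)"
      by (simp add: matrix_transpose_mul matrix_mul_assoc)
    finally show ?thesis by (simp add: BA1)
  qed
  have EMe: "(\<Sum>j\<in>UNIV. M$i$j * g0 j h * M$k$j) = (if i = k then g1 i h else 0)" for i k h
    using arg_cong[OF EM[of h], of "\<lambda>X. X$i$k"] by (simp add: L0_def L1_def quad_entry) (simp add: diag_mat_def)
  have col: "M$i$j * M$k$j = 0" if "i \<noteq> k" for i k j
  proof -
    have "\<forall>h. (\<Sum>j\<in>UNIV. (M$i$j * M$k$j) * g0 j h) = 0"
      using EMe[of i _ k] that by (simp add: algebra_simps)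
    then show ?thesis using indep_transfer[OF adm0 indep0, of "\<lambda>j. M$i$j * M$k$j"] by blast
  qed
  have BMB: "B1 = M ** B0" by (simp add: M_def matrix_mul_assoc[symmetric] AB0)
  have B0ii: "B0$i$i = 1 / sqrt (D0$i$i)" for i using W0_strict_lower by (simp add: B0_def B_entry)
  have B1ii: "B1$i$i = 1 / sqrt (D1$i$i)" for i using W1_diag by (simp add: B1_def B_entry)
  have B0low: "B0$a$b = 0" if "a < b" for a b using that W0_strict_lower by (simp add: B0_def B_entry)
  have B1ii_e: "B1$i$i = (\<Sum>j\<in>UNIV. M$i$j * B0$j$i)" for i
    using arg_cong[OF BMB, of "\<lambda>X. X$i$i"] by (simp add: mm_entry)
  have ex: "\<exists>j. i \<le> j \<and> M$i$j \<noteq> 0" for i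
  proof -
    have "B1$i$i \<noteq> 0" using B1ii pos1 by (metis div_0 less_numeral_extra(3) real_sqrt_gt_zero zero_neq_one divide_eq_0_iff real_sqrt_eq_zero_cancel_iff order_less_irrefl)
    then have "(\<Sum>j\<in>UNIV. M$i$j * B0$j$i) \<noteq> 0" using B1ii_e by simp
    then obtain j where "M$i$j * B0$j$i \<noteq> 0" by (meson sum.neutral)
    then have "M$i$j \<noteq> 0" "B0$j$i \<noteq> 0" by auto
    then show ?thesis using B0low[of j i] by (metis linorder_not_le)
  qed
  define \<sigma> where "\<sigma> i = (SOME j. i \<le> j \<and> M$i$j \<noteq> 0)" for i
  have \<sigma>: "i \<le> \<sigma> i \<and> M$i$(\<sigma> i) \<noteq> 0" for i unfolding \<sigma>_def by (rule someI_ex[OF ex])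
  have "inj \<sigma>"
  proof (rule injI)
    fix x y assume "\<sigma> x = \<sigma> y"
    then show "x = y" using \<sigma>[of x] \<sigma>[of y] col[of x y "\<sigma> x"] by auto
  qed
  then have sid: "\<sigma> i = i" for i using perm_id \<sigma> by blast
  have Mii: "M$i$i \<noteq> 0" for i using \<sigma>[of i] sid by simp
  have off: "M$k$i = 0" if "k \<noteq> i" for k i using col[of i k i] Mii[of i] that by simp
  have gM: "g1 i h = (M$i$i)^2 * g0 i h" for i h
  proof -
    have "(\<Sum>j\<in>UNIV. M$i$j * g0 j h * M$i$j) = M$i$i * g0 i h * M$i$i"
      by (rule sum_single) (simp add: off)
    then show ?thesis using EMe[of i h i] by (simp add: power2_eq_square algebra_simps)
  qed
  have Msq: "(M$i$i)^2 = 1" for i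
    using gM[of i 0] adm0 adm1 by (simp add: admissible_def unit_autocov_def)
  have B1M: "B1$i$j = M$i$i * B0$i$j" for i j
  proof -
    have "B1$i$j = (\<Sum>k\<in>UNIV. M$i$k * B0$k$j)" using arg_cong[OF BMB, of "\<lambda>X. X$i$j"] by (simp add: mm_entry)
    also have "\<dots> = M$i$i * B0$i$j" by (rule sum_single) (simp add: off)
    finally show ?thesis .
  qed
  have M1: "M$i$i = 1" for i
  proof -
    have "M$i$i > 0"
    proof -
      have "B1$i$i > 0" "B0$i$i > 0" using B0ii B1ii pos0 pos1 by simp_all
      then show ?thesis using B1M[of i i] by (metis zero_less_mult_pos2)
    qed
    then show ?thesis using Msq[of i] by (metis abs_of_pos power2_eq_1_iff abs_1 abs_neg_one abs_minus_cancel less_irrefl neg_less_0_iff_less zero_less_one)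
  qed
  have BB: "B1$i$j = B0$i$j" for i j using B1M M1 by simp
  have Deq: "D0$i$i = D1$i$i" for i
    using BB[of i i] B0ii B1ii pos0 pos1 by (metis divide_cancel_left zero_neq_one real_sqrt_eq_iff)
  have "D0 = D1"
    using dg0 dg1 Deq unfolding is_diag_def vec_eq_iff by metis
  moreover have "W0 = W1"
  proof -
    have "W0$i$j = W1$i$j" for i j
    proof (cases "i = j")
      case True then show ?thesis using W1_diag W0_strict_lower by simp
    next
      case False
      have "1 / sqrt (D0$i$i) \<noteq> 0" using pos0 by (metis divide_eq_0_iff real_sqrt_eq_zero_cancel_iff less_irrefl zero_neq_one)
      then show ?thesis using BB[of i j] False Deq[of i] by (simp add: B0_def B1_def B_entry)
    qed
    then show ?thesis by (simp add: vec_eq_iff)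
  qed
  moreover have "g0 = g1" using gM M1 by (intro ext) simp
  ultimately show ?thesis by simp
qed

end
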